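(* Let $A\in\mathbb{R}^{n\times n}$, $B\in\mathbb{R}^{n\times m}$, $C\in\mathbb{R}^{p\times n}$ with $(A,C)$ observable, $\ell$ its observability index, and $\mathbf{F}_\ell,\mathbf{L}_\ell,\mathbf{B}_\ell,\mathbf{A}_\ell$ as in the context. For each $\hat x$, $\hat\chi$ and each sequence $\{u(k)\}_{k=0}^\infty$ there exists $\hat\xi$ such that the solution $(x(\cdot),\chi(\cdot))$ of $x^+=Ax+Bu$, $y=Cx$, $\chi^+=\mathbf{F}_\ell\chi+\mathbf{L}_\ell y+\mathbf{B}_\ell u$ with $(x(0),\chi(0))=(\hat x,\hat\chi)$, its output $y(\cdot)=Cx(\cdot)$, and the solution $\xi(\cdot)$ of $\xi^+=\mathbf{A}_\ell\xi+\mathbf{B}_\ell v$ with $\xi(\ell)=\hat\xi$ and $v(k)=u(k)$ for $k\ge\ell$ satisfy $\xi(k)=(y(k-\ell),\dots,y(k-1),u(k-\ell),\dots,u(k-1))=\chi(k)$ for all $k\ge\ell$.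
   Context: $(v_1,\dots,v_r)$ denotes a stacked column vector. The observability index $\ell$ is the smallest $l$ with $\operatorname{rank}[C;CA;\dots;CA^{l-1}]=n$. $\mathcal{O}_\ell=[C;CA;\dots;CA^{\ell-1}]$; $\mathcal{T}_\ell\in\mathbb{R}^{p\ell\times m\ell}$ block lower triangular with $(i,j)$ block $CA^{i-j-1}B$ if $i>j$ and $0$ otherwise; $\mathcal{R}_\ell=[A^{\ell-1}B\ \cdots\ AB\ B]$; $\mathcal{O}_\ell^{L}$ a fixed left inverse of $\mathcal{O}_\ell$. $\mathbf{F}_\ell=\mathrm{blockdiag}(S_p,S_m)$, $S_q\in\mathbb{R}^{q\ell\times q\ell}$ with blocks $I_q$ at block positions $(i,i+1)$, $i=1,\dots,\ell-1$, zeros elsewhere; $\mathbf{L}_\ell\in\mathbb{R}^{(p\ell+m\ell)\times p}$ with $I_p$ in rows $p\ell-p+1,\dots,p\ell$, zeros elsewhere; $\mathbf{B}_\ell\in\mathbb{R}^{(p\ell+m\ell)\times m}$ with $I_m$ in its last $m$ rows, zeros elsewhere. $Z_\ell=[CA^\ell\mathcal{O}_\ell^L\ \ C\mathcal{R}_\ell-CA^\ell\mathcal{O}_\ell^L\mathcal{T}_\ell]$, $\mathbf{A}_\ell=\mathbf{F}_\ell+\mathbf{L}_\ell Z_\ell$. *)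

theory Defs
  imports "Jordan_Normal_Form.Matrix" "Jordan_Normal_Form.DL_Rank"
begin

text \<open>Matrices are Jordan_Normal_Form matrices of explicit dimensions.
 All block indices below are 0-based.\<close>

text \<open>Observability matrix O_l = [C; CA; ...; CA^(l-1)], of size (p*l) x n, p = dim_row C.\<close>
definition obs_mat :: "real mat \<Rightarrow> real mat \<Rightarrow> nat \<Rightarrow> real mat" where
  "obs_mat A C l = mat (dim_row C * l) (dim_col A)
     (\<lambda>(i,j). (C * (A ^\<^sub>m (i div dim_row C))) $$ (i mod dim_row C, j))"

definition observable :: "real mat \<Rightarrow> real mat \<Rightarrow> bool" where
  "observable A C \<longleftrightarrow> (\<exists>l. vec_space.rank (dim_row C * l) (obs_mat A C l) = dim_col A)"

definition obs_index :: "real mat \<Rightarrow> real mat \<Rightarrow> nat" where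
  "obs_index A C = (LEAST l. vec_space.rank (dim_row C * l) (obs_mat A C l) = dim_col A)"

definition toep_mat :: "real mat \<Rightarrow> real mat \<Rightarrow> real mat \<Rightarrow> nat \<Rightarrow> real mat" where
  "toep_mat A B C l = mat (dim_row C * l) (dim_col B * l)
     (\<lambda>(r,c). let i = r div dim_row C; j = c div dim_col B in
        if j < i then (C * (A ^\<^sub>m (i - j - 1)) * B) $$ (r mod dim_row C, c mod dim_col B) else 0)"

text \<open>R_l = [A^(l-1) B, ..., A B, B]: n x (m*l); block j equals A^(l-1-j) B.\<close>
definition reach_mat :: "real mat \<Rightarrow> real mat \<Rightarrow> nat \<Rightarrow> real mat" where
  "reach_mat A B l = mat (dim_row A) (dim_col B * l)
     (\<lambda>(r,c). ((A ^\<^sub>m (l - 1 - c div dim_col B)) * B) $$ (r, c mod dim_col B))"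

text \<open>S_q: (q*l) x (q*l), identity blocks I_q at block positions (i,i+1).\<close>
definition shift_mat :: "nat \<Rightarrow> nat \<Rightarrow> real mat" where
  "shift_mat q l = mat (q * l) (q * l) (\<lambda>(r,c). if c = r + q then 1 else 0)"

definition F_mat :: "nat \<Rightarrow> nat \<Rightarrow> nat \<Rightarrow> real mat" where
  "F_mat p m l = four_block_mat (shift_mat p l) (0\<^sub>m (p * l) (m * l))
                                (0\<^sub>m (m * l) (p * l)) (shift_mat m l)"

text \<open>L_l: (p*l+m*l) x p with I_p in rows p*l-p, ..., p*l-1 (0-based).\<close>
definition L_mat :: "nat \<Rightarrow> nat \<Rightarrow> nat \<Rightarrow> real mat" where
  "L_mat p m l = mat (p * l + m * l) p (\<lambda>(r,c). if r + p = p * l + c then 1 else 0)"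

text \<open>B_l: (p*l+m*l) x m with I_m in the last m rows.\<close>
definition Bl_mat :: "nat \<Rightarrow> nat \<Rightarrow> nat \<Rightarrow> real mat" where
  "Bl_mat p m l = mat (p * l + m * l) m (\<lambda>(r,c). if r + m = p * l + m * l + c then 1 else 0)"

definition Z_mat :: "real mat \<Rightarrow> real mat \<Rightarrow> real mat \<Rightarrow> real mat \<Rightarrow> nat \<Rightarrow> real mat" where
  "Z_mat A B C OL l = (let p = dim_row C; m = dim_col B;
      M1 = C * (A ^\<^sub>m l) * OL;
      M2 = C * reach_mat A B l - C * (A ^\<^sub>m l) * OL * toep_mat A B C l in
      mat p (p * l + m * l) (\<lambda>(i,j). if j < p * l then M1 $$ (i, j) else M2 $$ (i, j - p * l)))"

definition Al_mat :: "real mat \<Rightarrow> real mat \<Rightarrow> real mat \<Rightarrow> real mat \<Rightarrow> nat \<Rightarrow> real mat" where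
  "Al_mat A B C OL l = F_mat (dim_row C) (dim_col B) l
      + L_mat (dim_row C) (dim_col B) l * Z_mat A B C OL l"

fun traj :: "real mat \<Rightarrow> real vec \<Rightarrow> (nat \<Rightarrow> real vec) \<Rightarrow> nat \<Rightarrow> real vec" where
  "traj M z0 w 0 = z0"
| "traj M z0 w (Suc k) = M *\<^sub>v traj M z0 w k + w k"

text \<open>Stacked window (y(k-l),...,y(k-1),u(k-l),...,u(k-1)) of length p*l+m*l.\<close>
definition window :: "nat \<Rightarrow> nat \<Rightarrow> nat \<Rightarrow> (nat \<Rightarrow> real vec) \<Rightarrow> (nat \<Rightarrow> real vec) \<Rightarrow> nat \<Rightarrow> real vec" where
  "window p m l y u k = vec (p * l + m * l)
     (\<lambda>i. if i < p * l then y (k - l + i div p) $ (i mod p)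
          else u (k - l + (i - p * l) div m) $ ((i - p * l) mod m))"

end

theory Submission imports Defs begin

lemma mv_entry:
  assumes "M \<in> carrier_mat a b" "v \<in> carrier_vec b" "i < a"
  shows "(M *\<^sub>v v) $ i = (\<Sum>j<b. M $$ (i,j) * v $ j)"
  using assms by (auto simp: scalar_prod_def lessThan_atLeast0)

lemma sum_split_add: "(\<Sum>i<a+(b::nat). (f i::real)) = (\<Sum>i<a. f i) + (\<Sum>i<b. f (a+i))"
  by (induct b) (auto simp: add.assoc)

lemma sum_split_mul: "(\<Sum>c<m*(l::nat). (f c::real)) = (\<Sum>j<l. \<Sum>s<m. f (j*m+s))"
proof (induct l)
  case (Suc l)
  have "(\<Sum>c<m * Suc l. f c) = (\<Sum>c<m*l + m. f c)" by (simp add: add.commute)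
  also have "\<dots> = (\<Sum>c<m*l. f c) + (\<Sum>s<m. f (m*l+s))" by (rule sum_split_add)
  finally show ?case using Suc by (simp add: mult.commute)
qed simp

lemma sum_if_less: "q \<le> (l::nat) \<Longrightarrow> (\<Sum>j<l. if j < q then g j else (0::real)) = (\<Sum>j<q. g j)"
proof -
  assume "q \<le> l"
  then obtain d where "l = q + d" using le_Suc_ex by blast
  then show ?thesis by (simp add: sum_split_add)
qed

lemma pow_mat_Suc': "A \<in> carrier_mat n n \<Longrightarrow> A ^\<^sub>m (Suc k) = A * A ^\<^sub>m k"
proof (induct k)
  case 0 then show ?case by simp
next
  case (Suc k)
  have "A ^\<^sub>m Suc (Suc k) = (A * A ^\<^sub>m k) * A" using Suc by simp
  also have "\<dots> = A * (A ^\<^sub>m k * A)" using Suc.prems by (simp add: assoc_mult_mat[of _ n n _ n _ n])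
  finally show ?case by simp
qed

definition vsum :: "nat \<Rightarrow> nat set \<Rightarrow> (nat \<Rightarrow> real vec) \<Rightarrow> real vec" where
  "vsum d J g = vec d (\<lambda>t. \<Sum>j\<in>J. g j $ t)"

lemma vsum_carrier[simp]: "vsum d J g \<in> carrier_vec d" by (simp add: vsum_def)
lemma dim_vsum[simp]: "dim_vec (vsum d J g) = d" by (simp add: vsum_def)

lemma mv_vsum:
  assumes "M \<in> carrier_mat a d" "finite J" "\<And>j. j \<in> J \<Longrightarrow> g j \<in> carrier_vec d"
  shows "M *\<^sub>v vsum d J g = vsum a J (\<lambda>j. M *\<^sub>v g j)"
proof (rule eq_vecI)
  fix i assume "i < dim_vec (vsum a J (\<lambda>j. M *\<^sub>v g j))"
  then have i: "i < a" by simp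
  have "(M *\<^sub>v vsum d J g) $ i = (\<Sum>t<d. M $$ (i,t) * (\<Sum>j\<in>J. g j $ t))"
    using mv_entry[OF assms(1) vsum_carrier i] by (simp add: vsum_def)
  also have "\<dots> = (\<Sum>j\<in>J. \<Sum>t<d. M $$ (i,t) * g j $ t)"
    by (simp add: sum_distrib_left sum.swap[of _ J])
  also have "\<dots> = (\<Sum>j\<in>J. (M *\<^sub>v g j) $ i)"
    using mv_entry[OF assms(1) _ i] assms(3) by simp
  finally show "(M *\<^sub>v vsum d J g) $ i = vsum a J (\<lambda>j. M *\<^sub>v g j) $ i" using i by (simp add: vsum_def)
qed (insert assms, auto)

lemma vsum_Suc: "g q \<in> carrier_vec d \<Longrightarrow> vsum d {..<Suc q} g = vsum d {..<q} g + g q"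
  by (rule eq_vecI) (auto simp: vsum_def)

lemma idx_lt: "q < l \<Longrightarrow> r < (p::nat) \<Longrightarrow> q*p + r < p*l"
proof -
  assume a: "q < l" "r < p"
  have "q*p + r < Suc q * p" using a by simp
  also have "\<dots> \<le> l * p" using a by (intro mult_le_mono1) simp
  finally show ?thesis by (simp add: mult.commute)
qed

lemma idx_decomp: "i < p*(l::nat) \<Longrightarrow> i div p < l \<and> i mod p < p \<and> i = (i div p)*p + i mod p"
  by (metis div_mult_mod_eq less_mult_imp_div_less mod_less_divisor mult.commute
      mult_zero_left not_gr_zero not_less_zero)

definition Yv :: "nat \<Rightarrow> nat \<Rightarrow> (nat \<Rightarrow> real vec) \<Rightarrow> nat \<Rightarrow> real vec" where
  "Yv p l y k0 = vec (p*l) (\<lambda>i. y (k0 + i div p) $ (i mod p))"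
definition Uv :: "nat \<Rightarrow> nat \<Rightarrow> (nat \<Rightarrow> real vec) \<Rightarrow> nat \<Rightarrow> real vec" where
  "Uv m l u k0 = vec (m*l) (\<lambda>c. u (k0 + c div m) $ (c mod m))"

lemma Yv_carrier[simp]: "Yv p l y k0 \<in> carrier_vec (p*l)" by (simp add: Yv_def)
lemma Uv_carrier[simp]: "Uv m l u k0 \<in> carrier_vec (m*l)" by (simp add: Uv_def)

lemma F_mv:
  assumes v: "v \<in> carrier_vec (p*l+m*l)" and i: "i < p*l+m*l"
  shows "(F_mat p m l *\<^sub>v v) $ i = (if i < p*l then (if i+p < p*l then v $ (i+p) else 0)
                                     else (if i+m < p*l+m*l then v $ (i+m) else 0))"
proof -
  have Fc: "F_mat p m l \<in> carrier_mat (p*l+m*l) (p*l+m*l)"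
    by (simp add: F_mat_def shift_mat_def)
  have "(F_mat p m l *\<^sub>v v) $ i = (\<Sum>c<p*l+m*l. F_mat p m l $$ (i,c) * v $ c)"
    by (rule mv_entry[OF Fc v i])
  also have "\<dots> = (\<Sum>c<p*l+m*l. if c = (if i < p*l then i+p else i+m) then
        (if i < p*l then (if i+p < p*l then v $ c else 0) else v $ c) else 0)"
    using i by (intro sum.cong refl) (auto simp: F_mat_def shift_mat_def)
  also have "\<dots> = (if i < p*l then (if i+p < p*l then v $ (i+p) else 0)
                                     else (if i+m < p*l+m*l then v $ (i+m) else 0))"
    by (subst sum.delta) auto
  finally show ?thesis .
qed

lemma L_mv:
  assumes y: "y \<in> carrier_vec p" and i: "i < p*l+m*l"
  shows "(L_mat p m l *\<^sub>v y) $ i = (if i < p*l \<and> p*l \<le> i+p then y $ (i+p-p*l) else 0)"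
proof -
  have Lc: "L_mat p m l \<in> carrier_mat (p*l+m*l) p" by (simp add: L_mat_def)
  have "(L_mat p m l *\<^sub>v y) $ i = (\<Sum>c<p. L_mat p m l $$ (i,c) * y $ c)"
    by (rule mv_entry[OF Lc y i])
  also have "\<dots> = (\<Sum>c<p. if c = i+p-p*l then (if p*l \<le> i+p then y $ c else 0) else 0)"
    using i by (intro sum.cong refl) (auto simp: L_mat_def)
  also have "\<dots> = (if i < p*l \<and> p*l \<le> i+p then y $ (i+p-p*l) else 0)"
    by (subst sum.delta) auto
  finally show ?thesis .
qed

lemma Bl_mv:
  assumes w: "w \<in> carrier_vec m" and i: "i < p*l+m*l"
  shows "(Bl_mat p m l *\<^sub>v w) $ i = (if p*l+m*l \<le> i+m then w $ (i+m-(p*l+m*l)) else 0)"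
proof -
  have Bc: "Bl_mat p m l \<in> carrier_mat (p*l+m*l) m" by (simp add: Bl_mat_def)
  have "(Bl_mat p m l *\<^sub>v w) $ i = (\<Sum>c<m. Bl_mat p m l $$ (i,c) * w $ c)"
    by (rule mv_entry[OF Bc w i])
  also have "\<dots> = (\<Sum>c<m. if c = i+m-(p*l+m*l) then (if p*l+m*l \<le> i+m then w $ c else 0) else 0)"
    using i by (intro sum.cong refl) (auto simp: Bl_mat_def)
  also have "\<dots> = (if p*l+m*l \<le> i+m then w $ (i+m-(p*l+m*l)) else 0)"
    using i by (subst sum.delta) auto
  finally show ?thesis .
qed

lemma last_block: "i < p*(l::nat) \<Longrightarrow> p*l \<le> i+p \<Longrightarrow> i div p = l - 1 \<and> i mod p = i + p - p*l \<and> 0 < l"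
proof -
  assume a: "i < p*l" "p*l \<le> i+p"
  then have l: "0 < l" by (cases l) auto
  have e: "p*l = p*(l-1) + p" using l by (cases l) auto
  define i' where "i' = i - p*(l-1)"
  have ge: "p*(l-1) \<le> i" using a e by linarith
  have i': "i = p*(l-1) + i'" "i' < p" using a e ge by (auto simp: i'_def)
  have "i div p = l - 1" using i' by simp
  moreover have "i mod p = i'" using i' by simp
  moreover have "i + p - p*l = i'" using i' e by simp
  ultimately show ?thesis using l by simp
qed

definition Ent :: "nat \<Rightarrow> nat \<Rightarrow> nat \<Rightarrow> (nat \<Rightarrow> real vec) \<Rightarrow> (nat \<Rightarrow> real vec) \<Rightarrow> nat \<Rightarrow> nat \<Rightarrow> real" where
  "Ent p m l y u k i = (if i < p*l then y (k + i div p - l) $ (i mod p)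
                        else u (k + (i-p*l) div m - l) $ ((i-p*l) mod m))"

definition Cnd :: "nat \<Rightarrow> nat \<Rightarrow> nat \<Rightarrow> nat \<Rightarrow> nat \<Rightarrow> bool" where
  "Cnd p m l k i = (if i < p*l then l \<le> k + i div p else l \<le> k + (i-p*l) div m)"

lemma shift_step:
  assumes v: "v \<in> carrier_vec (p*l+m*l)" and i: "i < p*l+m*l"
    and y: "y k \<in> carrier_vec p" and u: "u k \<in> carrier_vec m"
    and H: "\<And>j. j < p*l+m*l \<Longrightarrow> Cnd p m l k j \<Longrightarrow> v $ j = Ent p m l y u k j"
    and c: "Cnd p m l (Suc k) i"
  shows "(F_mat p m l *\<^sub>v v + (L_mat p m l *\<^sub>v y k + Bl_mat p m l *\<^sub>v u k)) $ i = Ent p m l y u (Suc k) i"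
proof -
  have e: "(F_mat p m l *\<^sub>v v + (L_mat p m l *\<^sub>v y k + Bl_mat p m l *\<^sub>v u k)) $ i
     = (F_mat p m l *\<^sub>v v) $ i + (L_mat p m l *\<^sub>v y k) $ i + (Bl_mat p m l *\<^sub>v u k) $ i"
    using i by (simp add: F_mat_def shift_mat_def L_mat_def Bl_mat_def)
  show ?thesis
  proof (cases "i < p*l")
    case True
    then have p: "0 < p" by (cases p) auto
    have lpos: "0 < l" using True by (cases l) auto
    then have ml: "m \<le> m*l" by simp
    have nB: "\<not> p*l+m*l \<le> i+m" using True ml by linarith
    show ?thesis
    proof (cases "i+p < p*l")
      case True2: True
      have "Cnd p m l k (i+p)" using c True True2 p by (simp add: Cnd_def)
      then have "v $ (i+p) = Ent p m l y u k (i+p)" using H True2 by simp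
      then show ?thesis unfolding e F_mv[OF v i] L_mv[OF y i] Bl_mv[OF u i]
        using True True2 p nB by (simp add: Ent_def)
    next
      case False
      have lb: "i div p = l - 1 \<and> i mod p = i + p - p*l \<and> 0 < l" using last_block[OF True] False by simp
      show ?thesis unfolding e F_mv[OF v i] L_mv[OF y i] Bl_mv[OF u i]
        using True False lb nB by (simp add: Ent_def)
    qed
  next
    case False
    define j where "j = i - p*l"
    have j: "j < m*l" and ij: "i = p*l + j" using i False by (auto simp: j_def)
    then have mpos: "0 < m" by (cases m) auto
    show ?thesis
    proof (cases "i+m < p*l+m*l")
      case True2: True
      have a1: "i + m - p*l = j + m" using ij by simp
      have a2: "(j+m) div m = Suc (j div m)" "(j+m) mod m = j mod m" using mpos by simp_all
      have a3: "\<not> i + m < p*l" "\<not> i < p*l" using False by simp_all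
      have a4: "i - p*l = j" using ij by simp
      have "Cnd p m l k (i+m)" using c unfolding Cnd_def by (simp add: a1 a2 a3 a4)
      then have "v $ (i+m) = Ent p m l y u k (i+m)" using H True2 by simp
      also have "\<dots> = Ent p m l y u (Suc k) i" unfolding Ent_def by (simp add: a1 a2 a3 a4)
      finally show ?thesis unfolding e F_mv[OF v i] L_mv[OF y i] Bl_mv[OF u i]
        using a3 True2 by simp
    next
      case False2: False
      have lb: "j div m = l - 1 \<and> j mod m = j + m - m*l \<and> 0 < l" using last_block[OF j] False2 ij by simp
      have a3: "\<not> i < p*l" using False by simp_all
      have a4: "i - p*l = j" "i + m - (p*l+m*l) = j + m - m*l" using ij by simp_all
      have "Ent p m l y u (Suc k) i = u k $ (j + m - m*l)"
        unfolding Ent_def using lb by (simp add: a3 a4)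
      then show ?thesis unfolding e F_mv[OF v i] L_mv[OF y i] Bl_mv[OF u i]
        using a3 a4 False2 by simp
    qed
  qed
qed

lemma Fc: "F_mat p m l \<in> carrier_mat (p*l+m*l) (p*l+m*l)"
  by (simp add: F_mat_def shift_mat_def)
lemma Lc: "L_mat p m l \<in> carrier_mat (p*l+m*l) p" by (simp add: L_mat_def)
lemma Blc: "Bl_mat p m l \<in> carrier_mat (p*l+m*l) m" by (simp add: Bl_mat_def)

lemma chi_ent:
  assumes y: "\<And>k. y k \<in> carrier_vec p" and u: "\<And>k. u k \<in> carrier_vec m"
    and ch: "chih \<in> carrier_vec (p*l+m*l)"
  shows "traj (F_mat p m l) chih (\<lambda>k. L_mat p m l *\<^sub>v y k + Bl_mat p m l *\<^sub>v u k) k \<in> carrier_vec (p*l+m*l)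
    \<and> (\<forall>i<p*l+m*l. Cnd p m l k i \<longrightarrow> traj (F_mat p m l) chih (\<lambda>k. L_mat p m l *\<^sub>v y k + Bl_mat p m l *\<^sub>v u k) k $ i = Ent p m l y u k i)"
proof (induct k)
  case 0
  have "\<not> Cnd p m l 0 i" if i: "i < p*l+m*l" for i
  proof (cases "i < p*l")
    case True then show ?thesis using idx_decomp[OF True] by (simp add: Cnd_def)
  next
    case False
    then have "i - p*l < m*l" using i by simp
    then show ?thesis using idx_decomp[of "i - p*l" m l] False by (simp add: Cnd_def)
  qed
  then show ?case using ch by simp
next
  case (Suc k)
  let ?v = "traj (F_mat p m l) chih (\<lambda>k. L_mat p m l *\<^sub>v y k + Bl_mat p m l *\<^sub>v u k) k"
  have vc: "?v \<in> carrier_vec (p*l+m*l)" using Suc by simp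
  have c: "traj (F_mat p m l) chih (\<lambda>k. L_mat p m l *\<^sub>v y k + Bl_mat p m l *\<^sub>v u k) (Suc k) \<in> carrier_vec (p*l+m*l)"
    unfolding traj.simps(2)
    by (intro add_carrier_vec mult_mat_vec_carrier[OF Fc vc] mult_mat_vec_carrier[OF Lc y] mult_mat_vec_carrier[OF Blc u])
  show ?case
  proof (intro conjI allI impI c)
    fix i assume i: "i < p*l+m*l" and cn: "Cnd p m l (Suc k) i"
    show "traj (F_mat p m l) chih (\<lambda>k. L_mat p m l *\<^sub>v y k + Bl_mat p m l *\<^sub>v u k) (Suc k) $ i = Ent p m l y u (Suc k) i"
    proof -
      have H: "\<And>j. j<p*l+m*l \<Longrightarrow> Cnd p m l k j \<Longrightarrow> ?v $ j = Ent p m l y u k j" using Suc by blast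
      show ?thesis unfolding traj.simps(2) by (rule shift_step[OF vc i y u H cn])
    qed
  qed
qed

lemma window_ent:
  assumes "l \<le> k" "i < p*l+m*l"
  shows "Cnd p m l k i \<and> window p m l y u k $ i = Ent p m l y u k i"
  using assms by (simp add: Cnd_def Ent_def window_def)

lemma window_Suc:
  assumes y: "\<And>k. y k \<in> carrier_vec p" and u: "\<And>k. u k \<in> carrier_vec m" and k: "l \<le> k"
  shows "window p m l y u (Suc k) = F_mat p m l *\<^sub>v window p m l y u k + (L_mat p m l *\<^sub>v y k + Bl_mat p m l *\<^sub>v u k)"
proof (rule eq_vecI)
  fix i assume "i < dim_vec (F_mat p m l *\<^sub>v window p m l y u k + (L_mat p m l *\<^sub>v y k + Bl_mat p m l *\<^sub>v u k))"
  then have i: "i < p*l+m*l" by (simp add: F_mat_def shift_mat_def L_mat_def Bl_mat_def)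
  have wc: "window p m l y u k \<in> carrier_vec (p*l+m*l)" by (simp add: window_def)
  have "(F_mat p m l *\<^sub>v window p m l y u k + (L_mat p m l *\<^sub>v y k + Bl_mat p m l *\<^sub>v u k)) $ i = Ent p m l y u (Suc k) i"
  proof (rule shift_step[OF wc i y u])
    show "\<And>j. j < p*l+m*l \<Longrightarrow> Cnd p m l k j \<Longrightarrow> window p m l y u k $ j = Ent p m l y u k j"
      using window_ent[OF k] by blast
    show "Cnd p m l (Suc k) i" using window_ent[of l "Suc k" i] k i by simp
  qed
  then show "window p m l y u (Suc k) $ i = (F_mat p m l *\<^sub>v window p m l y u k + (L_mat p m l *\<^sub>v y k + Bl_mat p m l *\<^sub>v u k)) $ i"
    using window_ent[of l "Suc k" i] k i by simp
qed (simp add: window_def F_mat_def shift_mat_def Bl_mat_def L_mat_def)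


context
  fixes A B C OL :: "real mat" and n m p l :: nat and u :: "nat \<Rightarrow> real vec" and xh :: "real vec"
  assumes A: "A \<in> carrier_mat n n" and B: "B \<in> carrier_mat n m" and C: "C \<in> carrier_mat p n"
    and OL: "OL \<in> carrier_mat n (p * l)" and OLinv: "OL * obs_mat A C l = 1\<^sub>m n"
    and u: "\<And>k. u k \<in> carrier_vec m" and xh: "xh \<in> carrier_vec n"
begin

abbreviation "xx \<equiv> traj A xh (\<lambda>k. B *\<^sub>v u k)"

lemma xx_carrier[simp]: "xx k \<in> carrier_vec n"
  by (induct k) (use A B u xh in auto)

lemma Apow_mv_carrier[simp]: "v \<in> carrier_vec n \<Longrightarrow> A ^\<^sub>m k *\<^sub>v v \<in> carrier_vec n"
  using A by (metis mult_mat_vec_carrier pow_carrier_mat)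
lemma B_mv_carrier[simp]: "B *\<^sub>v u j \<in> carrier_vec n"
  using B u by (metis mult_mat_vec_carrier)
lemma A_mv_carrier[simp]: "v \<in> carrier_vec n \<Longrightarrow> A *\<^sub>v v \<in> carrier_vec n"
  using A by (metis mult_mat_vec_carrier)
lemma C_mv_carrier[simp]: "v \<in> carrier_vec n \<Longrightarrow> C *\<^sub>v v \<in> carrier_vec p"
  using C by (metis mult_mat_vec_carrier)

lemma Apow_mv_Suc: "v \<in> carrier_vec n \<Longrightarrow> A *\<^sub>v (A ^\<^sub>m k *\<^sub>v v) = A ^\<^sub>m (Suc k) *\<^sub>v v"
  using assoc_mult_mat_vec[of A n n "A ^\<^sub>m k" n v] A by (simp add: pow_mat_Suc'[OF A] del: pow_mat.simps)

lemma xx_expand: "xx (k0 + q) = A ^\<^sub>m q *\<^sub>v xx k0 + vsum n {..<q} (\<lambda>j. A ^\<^sub>m (q-1-j) *\<^sub>v (B *\<^sub>v u (k0+j)))"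
proof (induct q)
  case 0
  show ?case using A by (intro eq_vecI) (auto simp: vsum_def)
next
  case (Suc q)
  let ?g = "\<lambda>q j. A ^\<^sub>m (q-1-j) *\<^sub>v (B *\<^sub>v u (k0+j))"
  have gc: "?g q j \<in> carrier_vec n" for q j using A B u by (auto intro!: mult_mat_vec_carrier)
  have "xx (k0 + Suc q) = A *\<^sub>v xx (k0 + q) + B *\<^sub>v u (k0+q)" by simp
  also have "\<dots> = A *\<^sub>v (A ^\<^sub>m q *\<^sub>v xx k0) + A *\<^sub>v vsum n {..<q} (?g q) + B *\<^sub>v u (k0+q)"
    unfolding Suc by (subst mult_add_distrib_mat_vec[OF A]) (use A in \<open>auto intro!: mult_mat_vec_carrier[of _ n n]\<close>)
  also have "A *\<^sub>v vsum n {..<q} (?g q) = vsum n {..<q} (\<lambda>j. A *\<^sub>v ?g q j)"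
    using gc by (intro mv_vsum[OF A]) auto
  also have "\<dots> = vsum n {..<q} (?g (Suc q))"
  proof -
    have "A *\<^sub>v ?g q j = ?g (Suc q) j" if "j < q" for j
    proof -
      have "Suc (q - 1 - j) = Suc q - 1 - j" using that by auto
      then show ?thesis using Apow_mv_Suc[of "B *\<^sub>v u (k0+j)" "q-1-j"] B u by auto
    qed
    then show ?thesis unfolding vsum_def by (intro eq_vecI) auto
  qed
  also have "B *\<^sub>v u (k0+q) = ?g (Suc q) q" using A B u by simp
  also have "A *\<^sub>v (A ^\<^sub>m q *\<^sub>v xx k0) = A ^\<^sub>m Suc q *\<^sub>v xx k0" by (simp add: Apow_mv_Suc)
  finally have "xx (k0 + Suc q) = A ^\<^sub>m Suc q *\<^sub>v xx k0 + vsum n {..<q} (?g (Suc q)) + ?g (Suc q) q" .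
  then show ?case unfolding vsum_Suc[of "?g (Suc q)" q n, OF gc]
    by (subst (asm) assoc_add_vec[of _ n]) (use A gc in \<open>auto simp del: traj.simps pow_mat.simps\<close>)
qed

lemma R_carrier[simp]: "reach_mat A B l \<in> carrier_mat n (m*l)"
  using A B by (simp add: reach_mat_def)
lemma T_carrier[simp]: "toep_mat A B C l \<in> carrier_mat (p*l) (m*l)"
  using B C by (simp add: toep_mat_def)
lemma O_carrier[simp]: "obs_mat A C l \<in> carrier_mat (p*l) n"
  using A C by (simp add: obs_mat_def)

lemma R_Uv: "reach_mat A B l *\<^sub>v Uv m l u k0 = vsum n {..<l} (\<lambda>j. A ^\<^sub>m (l-1-j) *\<^sub>v (B *\<^sub>v u (k0+j)))"
proof (rule eq_vecI)
  fix t assume "t < dim_vec (vsum n {..<l} (\<lambda>j. A ^\<^sub>m (l-1-j) *\<^sub>v (B *\<^sub>v u (k0+j))))"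
  then have t: "t < n" by simp
  have "(reach_mat A B l *\<^sub>v Uv m l u k0) $ t = (\<Sum>c<m*l. reach_mat A B l $$ (t,c) * Uv m l u k0 $ c)"
    by (rule mv_entry[OF R_carrier Uv_carrier t])
  also have "\<dots> = (\<Sum>j<l. \<Sum>s<m. reach_mat A B l $$ (t,j*m+s) * Uv m l u k0 $ (j*m+s))"
    by (rule sum_split_mul)
  also have "\<dots> = (\<Sum>j<l. (A ^\<^sub>m (l-1-j) *\<^sub>v (B *\<^sub>v u (k0+j))) $ t)"
  proof (rule sum.cong[OF refl])
    fix j assume j: "j \<in> {..<l}"
    have "(\<Sum>s<m. reach_mat A B l $$ (t,j*m+s) * Uv m l u k0 $ (j*m+s))
        = (\<Sum>s<m. (A ^\<^sub>m (l-1-j) * B) $$ (t,s) * u (k0+j) $ s)"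
    proof (rule sum.cong[OF refl])
      fix s assume s: "s \<in> {..<m}"
      have lt: "j*m+s < m*l" using idx_lt[of j l s m] j s by simp
      show "reach_mat A B l $$ (t,j*m+s) * Uv m l u k0 $ (j*m+s) = (A ^\<^sub>m (l-1-j) * B) $$ (t,s) * u (k0+j) $ s"
        using lt t s A B by (simp add: reach_mat_def Uv_def)
    qed
    also have "\<dots> = ((A ^\<^sub>m (l-1-j) * B) *\<^sub>v u (k0+j)) $ t"
      by (rule mv_entry[symmetric]) (use A B u t in auto)
    also have "\<dots> = (A ^\<^sub>m (l-1-j) *\<^sub>v (B *\<^sub>v u (k0+j))) $ t"
      using A B u by (subst assoc_mult_mat_vec[of _ n n _ m]) auto
    finally show "(\<Sum>s<m. reach_mat A B l $$ (t,j*m+s) * Uv m l u k0 $ (j*m+s)) = (A ^\<^sub>m (l-1-j) *\<^sub>v (B *\<^sub>v u (k0+j))) $ t" .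
  qed
  finally show "(reach_mat A B l *\<^sub>v Uv m l u k0) $ t = vsum n {..<l} (\<lambda>j. A ^\<^sub>m (l-1-j) *\<^sub>v (B *\<^sub>v u (k0+j))) $ t"
    using t by (simp add: vsum_def)
qed (use A in \<open>simp add: reach_mat_def\<close>)

lemma T_Uv: "toep_mat A B C l *\<^sub>v Uv m l u k0 = vec (p*l) (\<lambda>i. vsum p {..<i div p} (\<lambda>j. C *\<^sub>v (A ^\<^sub>m (i div p-1-j) *\<^sub>v (B *\<^sub>v u (k0+j)))) $ (i mod p))"
proof (rule eq_vecI)
  fix i assume "i < dim_vec (vec (p*l) (\<lambda>i. vsum p {..<i div p} (\<lambda>j. C *\<^sub>v (A ^\<^sub>m (i div p-1-j) *\<^sub>v (B *\<^sub>v u (k0+j)))) $ (i mod p)))"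
  then have i: "i < p*l" by simp
  define q where "q = i div p"
  define r where "r = i mod p"
  have q: "q < l" and r: "r < p" using idx_decomp[OF i] by (auto simp: q_def r_def)
  have "(toep_mat A B C l *\<^sub>v Uv m l u k0) $ i = (\<Sum>c<m*l. toep_mat A B C l $$ (i,c) * Uv m l u k0 $ c)"
    by (rule mv_entry[OF T_carrier Uv_carrier i])
  also have "\<dots> = (\<Sum>j<l. \<Sum>s<m. toep_mat A B C l $$ (i,j*m+s) * Uv m l u k0 $ (j*m+s))"
    by (rule sum_split_mul)
  also have "\<dots> = (\<Sum>j<l. if j < q then (C *\<^sub>v (A ^\<^sub>m (q-1-j) *\<^sub>v (B *\<^sub>v u (k0+j)))) $ r else 0)"
  proof (rule sum.cong[OF refl])
    fix j assume j: "j \<in> {..<l}"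
    have "(\<Sum>s<m. toep_mat A B C l $$ (i,j*m+s) * Uv m l u k0 $ (j*m+s))
        = (\<Sum>s<m. (if j < q then (C * A ^\<^sub>m (q-1-j) * B) $$ (r,s) * u (k0+j) $ s else 0))"
    proof (rule sum.cong[OF refl])
      fix s assume s: "s \<in> {..<m}"
      have lt: "j*m+s < m*l" using idx_lt[of j l s m] j s by simp
      show "toep_mat A B C l $$ (i,j*m+s) * Uv m l u k0 $ (j*m+s) = (if j < q then (C * A ^\<^sub>m (q-1-j) * B) $$ (r,s) * u (k0+j) $ s else 0)"
        using lt i s A B C by (simp add: toep_mat_def Uv_def q_def r_def Let_def diff_diff_left)
    qed
    also have "\<dots> = (if j < q then ((C * A ^\<^sub>m (q-1-j) * B) *\<^sub>v u (k0+j)) $ r else 0)"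
    proof (cases "j < q")
      case True
      then show ?thesis by (simp only: if_True) (rule mv_entry[symmetric], use A B C u r in auto)
    qed simp
    also have "\<dots> = (if j < q then (C *\<^sub>v (A ^\<^sub>m (q-1-j) *\<^sub>v (B *\<^sub>v u (k0+j)))) $ r else 0)"
      using A B C u by (simp add: assoc_mult_mat_vec[of _ p n _ m] assoc_mult_mat_vec[of _ n n _ m] assoc_mult_mat_vec[of _ p n _ n])
    finally show "(\<Sum>s<m. toep_mat A B C l $$ (i,j*m+s) * Uv m l u k0 $ (j*m+s)) = (if j < q then (C *\<^sub>v (A ^\<^sub>m (q-1-j) *\<^sub>v (B *\<^sub>v u (k0+j)))) $ r else 0)" .
  qed
  also have "\<dots> = (\<Sum>j<q. (C *\<^sub>v (A ^\<^sub>m (q-1-j) *\<^sub>v (B *\<^sub>v u (k0+j)))) $ r)"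
    using q by (intro sum_if_less) simp
  finally show "(toep_mat A B C l *\<^sub>v Uv m l u k0) $ i = vec (p*l) (\<lambda>i. vsum p {..<i div p} (\<lambda>j. C *\<^sub>v (A ^\<^sub>m (i div p-1-j) *\<^sub>v (B *\<^sub>v u (k0+j)))) $ (i mod p)) $ i"
    using i r by (simp add: vsum_def q_def r_def)
qed (use C in \<open>simp add: toep_mat_def\<close>)

lemma O_x: assumes x0: "x0 \<in> carrier_vec n"
  shows "obs_mat A C l *\<^sub>v x0 = vec (p*l) (\<lambda>i. (C *\<^sub>v (A ^\<^sub>m (i div p) *\<^sub>v x0)) $ (i mod p))"
proof (rule eq_vecI)
  fix i assume "i < dim_vec (vec (p*l) (\<lambda>i. (C *\<^sub>v (A ^\<^sub>m (i div p) *\<^sub>v x0)) $ (i mod p)))"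
  then have i: "i < p*l" by simp
  have r: "i mod p < p" using idx_decomp[OF i] by auto
  have "(obs_mat A C l *\<^sub>v x0) $ i = (\<Sum>t<n. obs_mat A C l $$ (i,t) * x0 $ t)"
    by (rule mv_entry[OF O_carrier x0 i])
  also have "\<dots> = (\<Sum>t<n. (C * A ^\<^sub>m (i div p)) $$ (i mod p,t) * x0 $ t)"
    using i A C by (intro sum.cong refl) (simp add: obs_mat_def)
  also have "\<dots> = ((C * A ^\<^sub>m (i div p)) *\<^sub>v x0) $ (i mod p)"
    using mv_entry[of "C * A ^\<^sub>m (i div p)" p n x0 "i mod p"] A C x0 r by simp
  also have "\<dots> = (C *\<^sub>v (A ^\<^sub>m (i div p) *\<^sub>v x0)) $ (i mod p)"
    using A C x0 by (simp add: assoc_mult_mat_vec[of _ p n _ n])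
  finally show "(obs_mat A C l *\<^sub>v x0) $ i = vec (p*l) (\<lambda>i. (C *\<^sub>v (A ^\<^sub>m (i div p) *\<^sub>v x0)) $ (i mod p)) $ i"
    using i by simp
qed (use A C in \<open>simp add: obs_mat_def\<close>)

lemma Yv_eq: "Yv p l (\<lambda>k. C *\<^sub>v xx k) k0 = obs_mat A C l *\<^sub>v xx k0 + toep_mat A B C l *\<^sub>v Uv m l u k0"
proof (rule eq_vecI)
  fix i assume "i < dim_vec (obs_mat A C l *\<^sub>v xx k0 + toep_mat A B C l *\<^sub>v Uv m l u k0)"
  then have i: "i < p*l" using A C by (simp add: obs_mat_def toep_mat_def)
  define q where "q = i div p"
  define r where "r = i mod p"
  have q: "q < l" and r: "r < p" using idx_decomp[OF i] by (auto simp: q_def r_def)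
  let ?g = "\<lambda>j. A ^\<^sub>m (q-1-j) *\<^sub>v (B *\<^sub>v u (k0+j))"
  have "Yv p l (\<lambda>k. C *\<^sub>v xx k) k0 $ i = (C *\<^sub>v xx (k0 + q)) $ r"
    using i by (simp add: Yv_def q_def r_def del: traj.simps)
  also have "\<dots> = (C *\<^sub>v (A ^\<^sub>m q *\<^sub>v xx k0 + vsum n {..<q} ?g)) $ r"
    by (simp only: xx_expand)
  also have "\<dots> = (C *\<^sub>v (A ^\<^sub>m q *\<^sub>v xx k0)) $ r + (C *\<^sub>v vsum n {..<q} ?g) $ r"
    using C r by (subst mult_add_distrib_mat_vec[OF C]) (auto simp del: traj.simps)
  also have "C *\<^sub>v vsum n {..<q} ?g = vsum p {..<q} (\<lambda>j. C *\<^sub>v ?g j)"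
    by (rule mv_vsum[OF C]) auto
  finally show "Yv p l (\<lambda>k. C *\<^sub>v xx k) k0 $ i = (obs_mat A C l *\<^sub>v xx k0 + toep_mat A B C l *\<^sub>v Uv m l u k0) $ i"
    using i by (simp add: O_x[OF xx_carrier] T_Uv q_def r_def del: traj.simps)
qed (use A C in \<open>simp add: obs_mat_def Yv_def toep_mat_def\<close>)

lemma M1_carrier[simp]: "C * A ^\<^sub>m l * OL \<in> carrier_mat p (p*l)"
  using A C OL by (metis mult_carrier_mat pow_carrier_mat)

lemma Z_window: "Z_mat A B C OL l *\<^sub>v window p m l (\<lambda>k. C *\<^sub>v xx k) u (k0 + l) = C *\<^sub>v xx (k0 + l)"
proof -
  let ?y = "\<lambda>k. C *\<^sub>v xx k"
  let ?M1 = "C * A ^\<^sub>m l * OL"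
  let ?M2 = "C * reach_mat A B l - C * A ^\<^sub>m l * OL * toep_mat A B C l"
  let ?w = "window p m l ?y u (k0 + l)"
  let ?Y = "Yv p l ?y k0" and ?U = "Uv m l u k0"
  have M2c: "?M2 \<in> carrier_mat p (m*l)" by (rule minus_carrier_mat[OF mult_carrier_mat[OF M1_carrier T_carrier]])
  have Zc: "Z_mat A B C OL l \<in> carrier_mat p (p*l+m*l)" using B C by (simp add: Z_mat_def Let_def)
  have wc: "?w \<in> carrier_vec (p*l+m*l)" by (simp add: window_def)
  have step1: "Z_mat A B C OL l *\<^sub>v ?w = ?M1 *\<^sub>v ?Y + ?M2 *\<^sub>v ?U"
  proof (rule eq_vecI)
    fix i assume "i < dim_vec (?M1 *\<^sub>v ?Y + ?M2 *\<^sub>v ?U)"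
    then have i: "i < p" using C by simp
    have "(Z_mat A B C OL l *\<^sub>v ?w) $ i = (\<Sum>j<p*l+m*l. Z_mat A B C OL l $$ (i,j) * ?w $ j)"
      by (rule mv_entry[OF Zc wc i])
    also have "\<dots> = (\<Sum>j<p*l. Z_mat A B C OL l $$ (i,j) * ?w $ j) + (\<Sum>j<m*l. Z_mat A B C OL l $$ (i,p*l+j) * ?w $ (p*l+j))"
      by (rule sum_split_add)
    also have "(\<Sum>j<p*l. Z_mat A B C OL l $$ (i,j) * ?w $ j) = (\<Sum>j<p*l. ?M1 $$ (i,j) * ?Y $ j)"
      using i B C by (intro sum.cong refl) (simp add: Z_mat_def Let_def window_def Yv_def del: traj.simps)
    also have "\<dots> = (?M1 *\<^sub>v ?Y) $ i" by (rule mv_entry[symmetric]) (use i in auto)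
    also have "(\<Sum>j<m*l. Z_mat A B C OL l $$ (i,p*l+j) * ?w $ (p*l+j)) = (\<Sum>j<m*l. ?M2 $$ (i,j) * ?U $ j)"
      using i B C by (intro sum.cong refl) (simp add: Z_mat_def Let_def window_def Uv_def del: traj.simps)
    also have "\<dots> = (?M2 *\<^sub>v ?U) $ i" by (rule mv_entry[symmetric]) (use i M2c in auto)
    finally show "(Z_mat A B C OL l *\<^sub>v ?w) $ i = (?M1 *\<^sub>v ?Y + ?M2 *\<^sub>v ?U) $ i" using i M2c C by (subst index_add_vec) (auto simp: carrier_matD)
  qed (use Zc C in auto)
  let ?x0 = "xx k0"
  let ?TU = "toep_mat A B C l *\<^sub>v ?U"
  have x0c: "?x0 \<in> carrier_vec n" by simp
  have TUc: "?TU \<in> carrier_vec (p*l)" by (rule mult_mat_vec_carrier[OF T_carrier Uv_carrier])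
  have Oxc: "obs_mat A C l *\<^sub>v ?x0 \<in> carrier_vec (p*l)" by (rule mult_mat_vec_carrier[OF O_carrier x0c])
  have Ox: "OL *\<^sub>v (obs_mat A C l *\<^sub>v ?x0) = ?x0"
    using assoc_mult_mat_vec[OF OL O_carrier x0c] OLinv by simp
  have M1v: "?M1 *\<^sub>v v = C *\<^sub>v (A ^\<^sub>m l *\<^sub>v (OL *\<^sub>v v))" if "v \<in> carrier_vec (p*l)" for v
    using that A C OL by (simp add: assoc_mult_mat_vec[of _ p n _ "p*l"] assoc_mult_mat_vec[of _ n n _ "p*l"] assoc_mult_mat_vec[of _ p n _ n])
  have b: "?M1 *\<^sub>v ?Y = C *\<^sub>v (A ^\<^sub>m l *\<^sub>v ?x0) + ?M1 *\<^sub>v ?TU"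
    unfolding Yv_eq by (simp only: mult_add_distrib_mat_vec[OF M1_carrier Oxc TUc] M1v[OF Oxc] Ox)
  have c: "?M2 *\<^sub>v ?U = C *\<^sub>v (reach_mat A B l *\<^sub>v ?U) - ?M1 *\<^sub>v ?TU"
    using minus_mult_distrib_mat_vec[OF mult_carrier_mat[OF C R_carrier] mult_carrier_mat[OF M1_carrier T_carrier] Uv_carrier]
      assoc_mult_mat_vec[OF C R_carrier Uv_carrier] assoc_mult_mat_vec[OF M1_carrier T_carrier Uv_carrier] by simp
  have d: "C *\<^sub>v xx (k0 + l) = C *\<^sub>v (A ^\<^sub>m l *\<^sub>v ?x0) + C *\<^sub>v (reach_mat A B l *\<^sub>v ?U)"
    unfolding xx_expand R_Uv by (rule mult_add_distrib_mat_vec[OF C]) simp_all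
  have RUc: "reach_mat A B l *\<^sub>v ?U \<in> carrier_vec n" by (rule mult_mat_vec_carrier[OF R_carrier Uv_carrier])
  show ?thesis unfolding step1 b c d
    by (rule eq_vecI) (use C RUc TUc in \<open>auto simp del: traj.simps\<close>)
qed


lemma main_l:
  assumes ch: "chih \<in> carrier_vec (p*l+m*l)"
  shows "\<exists>xih \<in> carrier_vec (p*l+m*l). \<forall>k\<ge>l.
     traj (Al_mat A B C OL l) xih (\<lambda>j. Bl_mat p m l *\<^sub>v u (j + l)) (k - l) = window p m l (\<lambda>k. C *\<^sub>v xx k) u k
   \<and> window p m l (\<lambda>k. C *\<^sub>v xx k) u k = traj (F_mat p m l) chih (\<lambda>k. L_mat p m l *\<^sub>v (C *\<^sub>v xx k) + Bl_mat p m l *\<^sub>v u k) k"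
proof -
  let ?y = "\<lambda>k. C *\<^sub>v xx k"
  let ?w = "window p m l ?y u"
  have y: "\<And>k. ?y k \<in> carrier_vec p" by simp
  have dC: "dim_row C = p" and dB: "dim_col B = m" using B C by auto
  have Zc: "Z_mat A B C OL l \<in> carrier_mat p (p*l+m*l)" using B C by (simp add: Z_mat_def Let_def)
  have wc: "\<And>k. ?w k \<in> carrier_vec (p*l+m*l)" by (simp add: window_def)
  have Al: "Al_mat A B C OL l *\<^sub>v ?w k = F_mat p m l *\<^sub>v ?w k + L_mat p m l *\<^sub>v (Z_mat A B C OL l *\<^sub>v ?w k)" for k
    unfolding Al_mat_def dC dB
    by (subst add_mult_distrib_mat_vec[OF Fc mult_carrier_mat[OF Lc Zc] wc])
       (simp only: assoc_mult_mat_vec[OF Lc Zc wc])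
  have xi: "traj (Al_mat A B C OL l) (?w l) (\<lambda>j. Bl_mat p m l *\<^sub>v u (j + l)) d = ?w (l + d)" for d
  proof (induct d)
    case (Suc d)
    have "traj (Al_mat A B C OL l) (?w l) (\<lambda>j. Bl_mat p m l *\<^sub>v u (j + l)) (Suc d)
       = Al_mat A B C OL l *\<^sub>v ?w (d + l) + Bl_mat p m l *\<^sub>v u (d + l)"
      by (simp only: traj.simps(2) Suc add.commute)
    also have "\<dots> = F_mat p m l *\<^sub>v ?w (d + l) + L_mat p m l *\<^sub>v ?y (d + l) + Bl_mat p m l *\<^sub>v u (d + l)"
      by (simp only: Al Z_window)
    also have "\<dots> = F_mat p m l *\<^sub>v ?w (d + l) + (L_mat p m l *\<^sub>v ?y (d + l) + Bl_mat p m l *\<^sub>v u (d + l))"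
      by (rule assoc_add_vec[OF mult_mat_vec_carrier[OF Fc wc] mult_mat_vec_carrier[OF Lc y[of "d + l"]] mult_mat_vec_carrier[OF Blc u[of "d + l"]]])
    also have "\<dots> = ?w (Suc (d + l))"
      by (rule window_Suc[where y="\<lambda>k. C *\<^sub>v xx k" and u=u and p=p and m=m and l=l, OF y u, symmetric]) simp
    also have "Suc (d + l) = l + Suc d" by simp
    finally show ?case .
  qed simp
  have chi: "?w k = traj (F_mat p m l) chih (\<lambda>k. L_mat p m l *\<^sub>v ?y k + Bl_mat p m l *\<^sub>v u k) k" if k: "l \<le> k" for k
  proof -
    let ?c = "traj (F_mat p m l) chih (\<lambda>k. L_mat p m l *\<^sub>v ?y k + Bl_mat p m l *\<^sub>v u k) k"
    have ce: "?c \<in> carrier_vec (p*l+m*l) \<and> (\<forall>i<p*l+m*l. Cnd p m l k i \<longrightarrow> ?c $ i = Ent p m l ?y u k i)"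
      by (rule chi_ent[where y="\<lambda>k. C *\<^sub>v xx k" and u=u and k=k and l=l and p=p and m=m, OF y u ch])
    have dc: "dim_vec ?c = p*l+m*l" using conjunct1[OF ce] by (rule carrier_vecD)
    have dw: "dim_vec (?w k) = p*l+m*l" using wc[of k] by (rule carrier_vecD)
    show ?thesis
    proof (rule eq_vecI)
      fix i assume "i < dim_vec ?c"
      then have i: "i < p*l+m*l" using dc by simp
      have wi: "Cnd p m l k i \<and> ?w k $ i = Ent p m l ?y u k i" by (rule window_ent[OF k i])
      have "?c $ i = Ent p m l ?y u k i" using conjunct2[OF ce] i conjunct1[OF wi] by blast
      then show "?w k $ i = ?c $ i" using conjunct2[OF wi] by simp
    next
      show "dim_vec (?w k) = dim_vec ?c" using dc dw by simp
    qed
  qed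
  show ?thesis
  proof (intro bexI[of _ "?w l"] allI impI conjI)
    fix k assume k: "l \<le> k"
    show "traj (Al_mat A B C OL l) (?w l) (\<lambda>j. Bl_mat p m l *\<^sub>v u (j + l)) (k - l) = ?w k"
      using xi[of "k - l"] k by simp
    show "?w k = traj (F_mat p m l) chih (\<lambda>k. L_mat p m l *\<^sub>v ?y k + Bl_mat p m l *\<^sub>v u k) k"
      by (rule chi[OF k])
  qed (rule wc)
qed

end

theorem lemma7:
  fixes A B C OL :: "real mat" and n m p :: nat
    and u :: "nat \<Rightarrow> real vec" and xh chih :: "real vec"
  assumes "A \<in> carrier_mat n n" "B \<in> carrier_mat n m" "C \<in> carrier_mat p n"
    and "observable A C"
    and "OL \<in> carrier_mat n (p * obs_index A C)"
    and "OL * obs_mat A C (obs_index A C) = 1\<^sub>m n"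
    and "\<And>k. u k \<in> carrier_vec m"
    and "xh \<in> carrier_vec n"
    and "chih \<in> carrier_vec (p * obs_index A C + m * obs_index A C)"
  shows "\<exists>xih \<in> carrier_vec (p * obs_index A C + m * obs_index A C).
     (let l = obs_index A C;
          x = traj A xh (\<lambda>k. B *\<^sub>v u k);
          y = (\<lambda>k. C *\<^sub>v x k);
          chi = traj (F_mat p m l) chih (\<lambda>k. L_mat p m l *\<^sub>v y k + Bl_mat p m l *\<^sub>v u k);
          xi = (\<lambda>k. traj (Al_mat A B C OL l) xih (\<lambda>j. Bl_mat p m l *\<^sub>v u (j + l)) (k - l))
      in \<forall>k \<ge> l. xi k = window p m l y u k \<and> window p m l y u k = chi k)"
  unfolding Let_def by (rule main_l[OF assms(1,2,3,5,6,7,8,9)])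

end
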